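(* Let $\alpha^1,\dots,\alpha^p,\beta^1,\dots,\beta^p$ be smooth functions of $(t,x)$ such that $\sum_{s=1}^p(\alpha^s_i\beta^s_j-\alpha^s_j\beta^s_i)=0$ for all $0\le i<j\le p$, where subscripts denote orders of $x$-derivatives. Then $W(\alpha^1,\dots,\alpha^p,\beta^{s'})=0$ for every $s'\in\{1,\dots,p\}$.
   Context: The Wronskian with respect to $x$ of functions $\varphi^1,\dots,\varphi^l$ of $(t,x)$ is $W(\varphi^1,\dots,\varphi^l)=\det\bigl(\partial_x^{i}\varphi^j\bigr)_{i=0,\dots,l-1;\ j=1,\dots,l}$. *)

theory Defs
  imports "HOL-Analysis.Analysis" "Jordan_Normal_Form.Determinant"
begin

text \<open>Functions of (t,x) are modelled as maps real \<times> real \<Rightarrow> real.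
  Partial derivatives via the Frechet derivative in direction (1,0) (for t) or (0,1) (for x).\<close>

definition pdt :: "(real \<times> real \<Rightarrow> real) \<Rightarrow> real \<times> real \<Rightarrow> real" where
  "pdt f z = frechet_derivative f (at z) (1, 0)"

definition pdx :: "(real \<times> real \<Rightarrow> real) \<Rightarrow> real \<times> real \<Rightarrow> real" where
  "pdx f z = frechet_derivative f (at z) (0, 1)"

definition iter_pd :: "bool list \<Rightarrow> (real \<times> real \<Rightarrow> real) \<Rightarrow> real \<times> real \<Rightarrow> real" where
  "iter_pd bs f = foldr (\<lambda>b g. if b then pdt g else pdx g) bs f"

definition smooth2 :: "(real \<times> real \<Rightarrow> real) \<Rightarrow> bool" where
  "smooth2 f \<longleftrightarrow> (\<forall>bs z. iter_pd bs f differentiable (at z))"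

definition xder :: "nat \<Rightarrow> (real \<times> real \<Rightarrow> real) \<Rightarrow> real \<times> real \<Rightarrow> real" where
  "xder k f = (pdx ^^ k) f"

definition wronskian :: "nat \<Rightarrow> (nat \<Rightarrow> real \<times> real \<Rightarrow> real) \<Rightarrow> real \<times> real \<Rightarrow> real" where
  "wronskian l \<phi> z = Determinant.det (mat l l (\<lambda>(i, j). xder i (\<phi> j) z))"

end

theory Submission
  imports Defs
begin

lemma inv_exists:
  fixes W :: "real mat"
  assumes "W \<in> carrier_mat n n" "det W \<noteq> 0"
  shows "\<exists>C \<in> carrier_mat n n. C * W = 1\<^sub>m n \<and> W * C = 1\<^sub>m n"
proof -
  have "W \<in> Units (ring_mat TYPE(real) n undefined)"
    by (rule det_non_zero_imp_unit[OF assms])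
  thus ?thesis by (auto simp: Units_def ring_mat_def)
qed

theorem lemma7:
  fixes p :: nat
    and \<alpha> \<beta> :: "nat \<Rightarrow> real \<times> real \<Rightarrow> real"
  assumes smooth_\<alpha>: "\<And>s. s \<in> {1..p} \<Longrightarrow> smooth2 (\<alpha> s)"
    and smooth_\<beta>: "\<And>s. s \<in> {1..p} \<Longrightarrow> smooth2 (\<beta> s)"
    and rel: "\<And>i j z. i < j \<Longrightarrow> j \<le> p \<Longrightarrow>
      (\<Sum>s = 1..p. xder i (\<alpha> s) z * xder j (\<beta> s) z - xder j (\<alpha> s) z * xder i (\<beta> s) z) = 0"
    and s': "s' \<in> {1..p}"
  shows "wronskian (p + 1) (\<lambda>j. if j < p then \<alpha> (j + 1) else \<beta> s') z = 0"
proof (rule ccontr)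
  define n where "n = p + 1"
  define a where "a s i = xder i (\<alpha> s) z" for s i
  define b where "b s i = xder i (\<beta> s) z" for s i
  define W where "W = mat n n (\<lambda>(i, j). xder i ((\<lambda>j. if j < p then \<alpha> (j + 1) else \<beta> s') j) z)"
  have Wij: "W $$ (i,j) = (if j < p then a (j+1) i else b s' i)" if "i < n" "j < n" for i j
    using that by (simp add: W_def a_def b_def)
  have Wc: "W \<in> carrier_mat n n" by (simp add: W_def)
  assume "wronskian (p + 1) (\<lambda>j. if j < p then \<alpha> (j + 1) else \<beta> s') z \<noteq> 0"
  hence "det W \<noteq> 0" by (simp add: wronskian_def W_def n_def)
  then obtain C where Cc: "C \<in> carrier_mat n n" and CW: "C * W = 1\<^sub>m n"
    using inv_exists[OF Wc] by blast
  have E: "(\<Sum>i<n. C $$ (k,i) * W $$ (i,j)) = (if k = j then 1 else 0)" if "k < n" "j < n" for k j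
  proof -
    have "(C * W) $$ (k,j) = (if k = j then 1 else 0)" using CW that by simp
    moreover have "(C * W) $$ (k,j) = (\<Sum>i<n. C $$ (k,i) * W $$ (i,j))"
      using that Cc Wc by (simp add: scalar_prod_def atLeast0LessThan)
    ultimately show ?thesis by simp
  qed
  have sym: "(\<Sum>s=1..p. a s i * b s j) = (\<Sum>s=1..p. a s j * b s i)" if "i \<le> p" "j \<le> p" for i j
  proof -
    consider "i < j" | "i = j" | "j < i" by linarith
    thus ?thesis
    proof cases
      case 1
      from rel[OF 1 that(2), of z] show ?thesis
        by (simp add: a_def b_def sum_subtractf)
    next
      case 2 thus ?thesis by simp
    next
      case 3
      from rel[OF 3 that(1), of z] show ?thesis
        by (simp add: a_def b_def sum_subtractf mult.commute)
    qed
  qed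
  define v where "v i = C $$ (p, i)" for i
  have pn: "p < n" by (simp add: n_def)
  have va: "(\<Sum>i<n. v i * a s i) = 0" if "s \<in> {1..p}" for s
  proof -
    have s1: "s - 1 < n" "s - 1 < p" "s - 1 \<noteq> p" "s - 1 + 1 = s" using that by (auto simp: n_def)
    have "(\<Sum>i<n. C $$ (p,i) * W $$ (i, s - 1)) = 0" using E[OF pn s1(1)] s1(3) by simp
    moreover have "(\<Sum>i<n. C $$ (p,i) * W $$ (i, s - 1)) = (\<Sum>i<n. v i * a s i)"
      using Wij s1 by (intro sum.cong) (auto simp: v_def)
    ultimately show ?thesis by simp
  qed
  have vb: "(\<Sum>i<n. v i * b s' i) = 1"
  proof -
    have "(\<Sum>i<n. C $$ (p,i) * W $$ (i, p)) = 1" using E[OF pn pn] by simp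
    moreover have "(\<Sum>i<n. C $$ (p,i) * W $$ (i, p)) = (\<Sum>i<n. v i * b s' i)"
      using Wij pn by (intro sum.cong) (auto simp: v_def)
    ultimately show ?thesis by simp
  qed
  define w where "w s = (\<Sum>j<n. b s j * v j)" for s
  have Aw: "(\<Sum>s=1..p. a s i * w s) = 0" if "i < n" for i
  proof -
    have "(\<Sum>s=1..p. a s i * w s) = (\<Sum>j<n. v j * (\<Sum>s=1..p. a s i * b s j))"
      by (simp add: w_def sum_distrib_left sum_distrib_right mult_ac) (rule sum.swap)
    also have "\<dots> = (\<Sum>j<n. v j * (\<Sum>s=1..p. a s j * b s i))"
      using sym that by (intro sum.cong) (auto simp: n_def)
    also have "\<dots> = (\<Sum>s=1..p. b s i * (\<Sum>j<n. v j * a s j))"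
      by (simp add: sum_distrib_left sum_distrib_right mult_ac) (rule sum.swap)
    also have "\<dots> = 0" using va by simp
    finally show ?thesis .
  qed
  define x where "x j = (if j < p then w (j+1) else 0)" for j
  have Wx: "(\<Sum>j<n. W $$ (i,j) * x j) = 0" if "i < n" for i
  proof -
    have "(\<Sum>j<n. W $$ (i,j) * x j) = (\<Sum>j<p. a (j+1) i * w (j+1))"
      using that Wij by (simp add: n_def x_def)
    also have "\<dots> = (\<Sum>s=1..p. a s i * w s)"
      by (rule sum.reindex_bij_witness[of _ "\<lambda>s. s - 1" Suc]) auto
    finally show ?thesis using Aw[OF that] by simp
  qed
  have x0: "x k = 0" if "k < n" for k
  proof -
    have "x k = (\<Sum>j<n. (\<Sum>i<n. C $$ (k,i) * W $$ (i,j)) * x j)"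
    proof -
      have "(\<Sum>j<n. (\<Sum>i<n. C $$ (k,i) * W $$ (i,j)) * x j) = (\<Sum>j<n. (if k = j then x j else 0))"
        using E[OF that] by (intro sum.cong) auto
      also have "\<dots> = x k" using that by simp
      finally show ?thesis by simp
    qed
    also have "\<dots> = (\<Sum>i<n. C $$ (k,i) * (\<Sum>j<n. W $$ (i,j) * x j))"
      by (simp add: sum_distrib_left sum_distrib_right mult_ac) (rule sum.swap)
    also have "\<dots> = 0" using Wx by simp
    finally show ?thesis .
  qed
  have "w s' = 0"
  proof -
    have h: "s' - 1 < n" "s' - 1 < p" "s' - 1 + 1 = s'" using s' by (auto simp: n_def)
    show ?thesis using x0[OF h(1)] h(2,3) by (simp only: x_def if_True)
  qed
  moreover have "w s' = 1" using vb by (simp add: w_def mult.commute)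
  ultimately show False by simp
qed

end
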